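(* Let $M$ be a compact orientable $d$-dimensional manifold with piecewise smooth boundary, let $g_{[0]}$ be a Riemannian metric on $M$, let $\overline{E}$ be a fixed smooth symmetric $(0,2)$-tensor field on $M$, and for a real parameter $\alpha$ let $g_{[t]}=g_{[0]}+2\alpha\overline{E}$ (a Riemannian metric for $|\alpha|$ small), so that the Green strain tensor is $E=\tfrac12(g_{[t]}-g_{[0]})=\alpha\overline{E}$. Let $C$ be a stiffness tensor field for the reference metric $g_{[0]}$, and define the strain energy $W=\int_M \tfrac12 C(E,E)\,\upsilon_{[0]}$, where $\upsilon_{[0]}$ is the Riemannian volume form of $g_{[0]}$. Define the swapped states by taking $g_{[\hat 0]}=g_{[t]}$ as reference metric and $g_{[\hat t]}=g_{[0]}$ as current metric, with swapped strain $\hat E=\tfrac12(g_{[\hat t]}-g_{[\hat 0]})$, swapped volume form $\upsilon_{[\hat 0]}$ (the volume form of $g_{[t]}$), a swapped stiffness tensor field $\hat C$ (the stiffness tensor field for the reference metric $g_{[t]}$) satisfying $\hat C\in C+O(\alpha)$, and swapped strain energy $\hat W=\int_M\tfrac12\hat C(\hat E,\hat E)\,\upsilon_{[\hat 0]}$. Then $\hat W\in W+O(\alpha^3)$ as $\alpha\to 0$; i.e. $W$ and $\hat W$ agree up to a residual term of order $\alpha^3$.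
   Context: A stiffness tensor field is a $(4,0)$-tensor field $C=C^{ijkl}\partial_{u^i}\otimes\partial_{u^j}\otimes\partial_{u^k}\otimes\partial_{u^l}$ with $C^{ijkl}=C^{klij}=C^{jikl}=C^{ijlk}$; $C(E,E)=C^{ijkl}E_{ij}E_{kl}$. In the isotropic case, $C^{ijkl}=\lambda g^{*ij}g^{*kl}+\mu(g^{*ik}g^{*jl}+g^{*il}g^{*jk})$ with $g^*$ the dual of the reference metric and $\lambda,\mu$ the Lamé parameters. $O(\alpha^k)$ denotes the class of quantities bounded by a constant times $|\alpha|^k$ as $\alpha\to0$. *)

theory Defs
  imports "HOL-Analysis.Analysis" "HOL-Library.Landau_Symbols"
begin

text \<open>Pointwise (frame) model of tensor fields on the manifold M.  At each point x,
  the tangent space is identified with real^'n via a (measurable) frame;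
  (0,2)-tensors are matrices real^'n^'n, (4,0)-tensors are functions of four indices.\<close>

type_synonym 'n tensor4 = "'n \<Rightarrow> 'n \<Rightarrow> 'n \<Rightarrow> 'n \<Rightarrow> real"

definition is_stiffness :: "('n::finite) tensor4 \<Rightarrow> bool" where
  "is_stiffness C \<longleftrightarrow> (\<forall>i j k l. C i j k l = C k l i j \<and> C i j k l = C j i k l \<and> C i j k l = C i j l k)"

definition contract :: "('n::finite) tensor4 \<Rightarrow> real^'n^'n \<Rightarrow> real" where
  "contract C E = (\<Sum>i\<in>UNIV. \<Sum>j\<in>UNIV. \<Sum>k\<in>UNIV. \<Sum>l\<in>UNIV. C i j k l * E$i$j * E$k$l)"

definition symmetric_mat :: "real^'n^'n \<Rightarrow> bool" where
  "symmetric_mat A \<longleftrightarrow> transpose A = A"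

definition cur_metric :: "('a \<Rightarrow> real^'n^'n) \<Rightarrow> ('a \<Rightarrow> real^'n^'n) \<Rightarrow> real \<Rightarrow> 'a \<Rightarrow> real^'n^'n" where
  "cur_metric g0 Eb \<alpha> x = g0 x + (2 * \<alpha>) *\<^sub>R Eb x"

definition green_strain :: "real^'n^'n \<Rightarrow> real^'n^'n \<Rightarrow> real^'n^'n" where
  "green_strain gref gcur = (1/2) *\<^sub>R (gcur - gref)"

text \<open>Density of the Riemannian volume form of g relative to that of g0 (in any
  oriented frame): upsilon_g = sqrt(det g / det g0) upsilon_g0.\<close>
definition vol_ratio :: "real^'n^'n \<Rightarrow> real^'n^'n \<Rightarrow> real" where
  "vol_ratio g0 g = sqrt (det g / det g0)"

text \<open>Strain energy int_M 1/2 C(E,E) upsilon, where the volume form upsilon is given by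
  its density rho w.r.t. the reference volume measure M (= upsilon_[0]).\<close>
definition strain_energy :: "'a measure \<Rightarrow> ('a \<Rightarrow> ('n::finite) tensor4) \<Rightarrow> ('a \<Rightarrow> real^'n^'n) \<Rightarrow> ('a \<Rightarrow> real) \<Rightarrow> real" where
  "strain_energy M C E \<rho> = (\<integral>x. (1/2) * contract (C x) (E x) * \<rho> x \<partial>M)"

end

theory Submission
  imports Defs
begin


lemma det_cont: "continuous_on S (det :: real^'n::finite^'n \<Rightarrow> real)"
proof -
  have eq: "det = (\<lambda>A::real^'n^'n. \<Sum>p\<in>{p. p permutes (UNIV::'n set)}. of_int (sign p) * (\<Prod>i\<in>UNIV. A$i$p i))"
    by (rule ext) (simp add: det_def)
  show ?thesis unfolding eq
    by (intro continuous_on_sum continuous_on_mult continuous_on_const continuous_on_prod continuous_on_component continuous_on_id)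
qed

lemma coercive_quad:
  fixes A :: "real^'n::finite^'n"
  shows "v \<bullet> ((a *\<^sub>R A + b *\<^sub>R B) *v v) = a * (v \<bullet> (A *v v)) + b * (v \<bullet> (B *v v))"
  by (simp add: matrix_vector_mult_add_rdistrib inner_add_right scaleR_matrix_vector_assoc[symmetric])

lemma coercive_det_nz:
  fixes A :: "real^'n::finite^'n"
  assumes c: "c > 0" and A: "\<forall>v. v \<bullet> (A *v v) \<ge> c * (norm v)\<^sup>2"
  shows "det A \<noteq> 0"
proof -
  have "inj ((*v) A)"
  proof (rule injI)
    fix x y assume "A *v x = A *v y"
    then have "A *v (x - y) = 0" by (simp add: matrix_vector_mult_diff_distrib)
    then have "c * (norm (x - y))\<^sup>2 \<le> 0" using A[rule_format, of "x - y"] by simp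
    then show "x = y" using c by (simp add: mult_le_0_iff)
  qed
  then show ?thesis using det_nz_iff_inj[OF matrix_vector_mul_linear[of A]] by simp
qed

lemma coercive_det_pos:
  fixes A :: "real^'n::finite^'n"
  assumes c: "c > 0" and A: "\<forall>v. v \<bullet> (A *v v) \<ge> c * (norm v)\<^sup>2"
  shows "det A > 0"
proof (rule ccontr)
  assume "\<not> det A > 0"
  define h where "h = (\<lambda>s::real. det ((1 - s) *\<^sub>R (c *\<^sub>R mat 1) + s *\<^sub>R A))"
  have h0: "h 0 > 0" using c by (simp add: h_def det_diagonal mat_def)
  have h1: "h 1 \<le> 0" using \<open>\<not> det A > 0\<close> by (simp add: h_def)
  have hc: "continuous_on {0..1} h" unfolding h_def
    by (rule continuous_on_compose2[OF det_cont[of UNIV]]) (auto intro!: continuous_intros)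
  obtain s where s: "s \<in> {0..1}" "h s = 0"
    using IVT2'[of h 1 0 0] h0 h1 hc by auto
  have "\<forall>v. v \<bullet> (((1 - s) *\<^sub>R (c *\<^sub>R mat 1) + s *\<^sub>R A) *v v) \<ge> c * (norm v)\<^sup>2"
  proof
    fix v :: "real^'n"
    have "v \<bullet> (((1 - s) *\<^sub>R (c *\<^sub>R mat 1) + s *\<^sub>R A) *v v) = (1 - s) * (c * (norm v)\<^sup>2) + s * (v \<bullet> (A *v v))"
      by (simp add: coercive_quad scaleR_matrix_vector_assoc[symmetric] power2_norm_eq_inner)
    also have "\<dots> \<ge> (1 - s) * (c * (norm v)\<^sup>2) + s * (c * (norm v)\<^sup>2)"
      using s(1) A by (intro add_left_mono mult_left_mono) auto
    finally show "v \<bullet> (((1 - s) *\<^sub>R (c *\<^sub>R mat 1) + s *\<^sub>R A) *v v) \<ge> c * (norm v)\<^sup>2" by (simp add: algebra_simps)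
  qed
  then have "det ((1 - s) *\<^sub>R (c *\<^sub>R mat 1) + s *\<^sub>R A) \<noteq> 0" by (rule coercive_det_nz[OF c])
  with s(2) show False by (simp add: h_def)
qed



lemma quad_expand: "v \<bullet> (A *v v) = (\<Sum>i\<in>UNIV. \<Sum>j\<in>UNIV. v$i * A$i$j * v$j)"
  for A :: "real^'n::finite^'n"
  by (simp add: inner_vec_def matrix_vector_mult_def sum_distrib_left mult_ac)

lemma det_lower:
  fixes c B :: real
  assumes c: "c > 0"
  shows "\<exists>d>0. \<forall>A::real^'n::finite^'n. (\<forall>i j. \<bar>A$i$j\<bar> \<le> B) \<and> (\<forall>v. v \<bullet> (A *v v) \<ge> c * (norm v)\<^sup>2) \<longrightarrow> det A \<ge> d"
proof -
  define K where "K = {A::real^'n^'n. (\<forall>i j. \<bar>A$i$j\<bar> \<le> B) \<and> (\<forall>v. v \<bullet> (A *v v) \<ge> c * (norm v)\<^sup>2)}"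
  have cl: "closed K" unfolding K_def quad_expand
    by (intro closed_Collect_conj closed_Collect_all closed_Collect_le continuous_intros)
  have bd: "bounded K"
  proof -
    have "norm A \<le> real CARD('n) * (real CARD('n) * B)" if "A \<in> K" for A
    proof -
      have "norm A \<le> (\<Sum>i\<in>UNIV. norm (A$i))" unfolding norm_vec_def
        by (rule order_trans[OF L2_set_le_sum_abs]) simp
      also have "\<dots> \<le> (\<Sum>i\<in>(UNIV::'n set). real CARD('n) * B)"
      proof (rule sum_mono)
        fix i
        have "norm (A$i) \<le> (\<Sum>j\<in>UNIV. \<bar>A$i$j\<bar>)" by (rule norm_le_l1_cart)
        also have "\<dots> \<le> (\<Sum>j\<in>(UNIV::'n set). B)" using that by (intro sum_mono) (auto simp: K_def)
        finally show "norm (A$i) \<le> real CARD('n) * B" by simp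
      qed
      finally show ?thesis by simp
    qed
    then show ?thesis unfolding bounded_iff by blast
  qed
  show ?thesis
  proof (cases "K = {}")
    case True
    then show ?thesis by (intro exI[of _ 1]) (auto simp: K_def)
  next
    case False
    have "compact K" using cl bd by (simp add: compact_eq_bounded_closed)
    then obtain A0 where A0: "A0 \<in> K" "\<forall>A\<in>K. det A0 \<le> det A"
      using continuous_attains_inf[OF _ False det_cont] by blast
    have "det A0 > 0" using A0(1) c coercive_det_pos by (auto simp: K_def)
    then show ?thesis using A0 by (intro exI[of _ "det A0"]) (auto simp: K_def)
  qed
qed



lemma prod_lip:
  fixes a b :: "'i \<Rightarrow> real"
  assumes fin: "finite I" and M: "M > 0" and a: "\<And>i. i \<in> I \<Longrightarrow> \<bar>a i\<bar> \<le> M"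
    and b: "\<And>i. i \<in> I \<Longrightarrow> \<bar>b i\<bar> \<le> M" and e: "\<And>i. i \<in> I \<Longrightarrow> \<bar>a i - b i\<bar> \<le> e"
  shows "\<bar>(\<Prod>i\<in>I. a i) - (\<Prod>i\<in>I. b i)\<bar> \<le> M ^ card I * (real (card I) * (e / M))"
proof -
  have pa: "(\<Prod>i\<in>I. a i) = M ^ card I * (\<Prod>i\<in>I. a i / M)"
  proof -
    have "(\<Prod>i\<in>I. M * (a i / M)) = M ^ card I * (\<Prod>i\<in>I. a i / M)" by (simp only: prod.distrib prod_constant)
    then show ?thesis using M by simp
  qed
  have pb: "(\<Prod>i\<in>I. b i) = M ^ card I * (\<Prod>i\<in>I. b i / M)"
  proof -
    have "(\<Prod>i\<in>I. M * (b i / M)) = M ^ card I * (\<Prod>i\<in>I. b i / M)" by (simp only: prod.distrib prod_constant)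
    then show ?thesis using M by simp
  qed
  have "norm ((\<Prod>i\<in>I. a i / M) - (\<Prod>i\<in>I. b i / M)) \<le> (\<Sum>i\<in>I. norm (a i / M - b i / M))"
    using a b M by (intro norm_prod_diff) auto
  also have "\<dots> \<le> (\<Sum>i\<in>I. e / M)"
  proof (rule sum_mono)
    fix i assume "i \<in> I"
    have "norm (a i / M - b i / M) = \<bar>a i - b i\<bar> / M" using M by (simp add: diff_divide_distrib[symmetric])
    then show "norm (a i / M - b i / M) \<le> e / M" using e[OF \<open>i\<in>I\<close>] M by (simp add: divide_right_mono)
  qed
  finally have "\<bar>(\<Prod>i\<in>I. a i / M) - (\<Prod>i\<in>I. b i / M)\<bar> \<le> real (card I) * (e / M)" by simp
  then have "M ^ card I * \<bar>(\<Prod>i\<in>I. a i / M) - (\<Prod>i\<in>I. b i / M)\<bar> \<le> M ^ card I * (real (card I) * (e / M))"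
    using M by (intro mult_left_mono) auto
  then show ?thesis unfolding pa pb using M by (simp add: abs_mult right_diff_distrib[symmetric])
qed

lemma det_lip:
  fixes A A' :: "real^'n::finite^'n"
  assumes M: "M > 0" and a: "\<forall>i j. \<bar>A$i$j\<bar> \<le> M" and b: "\<forall>i j. \<bar>A'$i$j\<bar> \<le> M"
    and e: "\<forall>i j. \<bar>A$i$j - A'$i$j\<bar> \<le> e"
  shows "\<bar>det A - det A'\<bar> \<le> real (card {p. p permutes (UNIV::'n set)}) * (M ^ CARD('n) * (real CARD('n) * (e / M)))"
proof -
  let ?P = "{p. p permutes (UNIV::'n set)}"
  have fP: "finite ?P" by (simp add: finite_permutations)
  have "det A - det A' = (\<Sum>p\<in>?P. of_int (sign p) * ((\<Prod>i\<in>UNIV. A$i$p i) - (\<Prod>i\<in>UNIV. A'$i$p i)))"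
    by (simp add: det_def sum_subtractf[symmetric] right_diff_distrib)
  also have "\<bar>\<dots>\<bar> \<le> (\<Sum>p\<in>?P. \<bar>of_int (sign p) * ((\<Prod>i\<in>UNIV. A$i$p i) - (\<Prod>i\<in>UNIV. A'$i$p i))\<bar>)"
    by (rule sum_abs)
  also have "\<dots> \<le> (\<Sum>p\<in>?P. M ^ CARD('n) * (real CARD('n) * (e / M)))"
  proof (rule sum_mono)
    fix p
    have "\<bar>of_int (sign p) * ((\<Prod>i\<in>UNIV. A$i$p i) - (\<Prod>i\<in>UNIV. A'$i$p i))\<bar> = \<bar>(\<Prod>i\<in>UNIV. A$i$p i) - (\<Prod>i\<in>UNIV. A'$i$p i)\<bar>"
      by (simp add: abs_mult sign_def)
    also have "\<dots> \<le> M ^ CARD('n) * (real CARD('n) * (e / M))"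
      using a b e M by (intro prod_lip) auto
    finally show "\<bar>of_int (sign p) * ((\<Prod>i\<in>UNIV. A$i$p i) - (\<Prod>i\<in>UNIV. A'$i$p i))\<bar> \<le> M ^ CARD('n) * (real CARD('n) * (e / M))" .
  qed
  also have "\<dots> = real (card ?P) * (M ^ CARD('n) * (real CARD('n) * (e / M)))" by simp
  finally show ?thesis .
qed



lemma sum_abs_bound:
  fixes f :: "'n::finite \<Rightarrow> real"
  assumes "\<And>i. \<bar>f i\<bar> \<le> K"
  shows "\<bar>\<Sum>i\<in>UNIV. f i\<bar> \<le> real CARD('n) * K"
proof -
  have "\<bar>\<Sum>i\<in>UNIV. f i\<bar> \<le> (\<Sum>i\<in>(UNIV::'n set). \<bar>f i\<bar>)" by (rule sum_abs)
  also have "\<dots> \<le> (\<Sum>i\<in>(UNIV::'n set). K)" using assms by (intro sum_mono) auto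
  finally show ?thesis by simp
qed

lemma contract_scale: "contract C (a *\<^sub>R E) = a\<^sup>2 * contract C E"
  by (simp add: contract_def sum_distrib_left power2_eq_square mult_ac)

lemma contract_diff_bound:
  fixes C C' :: "'n::finite tensor4"
  assumes a: "\<forall>i j k l. \<bar>C i j k l - C' i j k l\<bar> \<le> a" and b: "\<forall>i j. \<bar>E$i$j\<bar> \<le> b"
  shows "\<bar>contract C E - contract C' E\<bar> \<le> real CARD('n) ^ 4 * (a * b\<^sup>2)"
proof -
  let ?n = "real CARD('n)"
  have eq: "contract C E - contract C' E = (\<Sum>i\<in>UNIV. \<Sum>j\<in>UNIV. \<Sum>k\<in>UNIV. \<Sum>l\<in>UNIV. (C i j k l - C' i j k l) * E$i$j * E$k$l)"
    by (simp add: contract_def sum_subtractf[symmetric] left_diff_distrib)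
  have 0: "\<bar>(C i j k l - C' i j k l) * E$i$j * E$k$l\<bar> \<le> a * b\<^sup>2" for i j k l
  proof -
    have "\<bar>(C i j k l - C' i j k l) * E$i$j * E$k$l\<bar> = \<bar>C i j k l - C' i j k l\<bar> * \<bar>E$i$j\<bar> * \<bar>E$k$l\<bar>"
      by (simp add: abs_mult)
    also have "\<dots> \<le> a * b * b"
    proof -
      have a0: "0 \<le> a" using a order_trans[OF abs_ge_zero] by blast
      have b0: "0 \<le> b" using b order_trans[OF abs_ge_zero] by blast
      show ?thesis using a b a0 b0 by (intro mult_mono) auto
    qed
    finally show ?thesis by (simp add: power2_eq_square mult_ac)
  qed
  have 1: "\<bar>\<Sum>l\<in>UNIV. (C i j k l - C' i j k l) * E$i$j * E$k$l\<bar> \<le> ?n * (a * b\<^sup>2)" for i j k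
    by (rule sum_abs_bound[OF 0])
  have 2: "\<bar>\<Sum>k\<in>UNIV. \<Sum>l\<in>UNIV. (C i j k l - C' i j k l) * E$i$j * E$k$l\<bar> \<le> ?n * (?n * (a * b\<^sup>2))" for i j
    by (rule sum_abs_bound[OF 1])
  have 3: "\<bar>\<Sum>j\<in>UNIV. \<Sum>k\<in>UNIV. \<Sum>l\<in>UNIV. (C i j k l - C' i j k l) * E$i$j * E$k$l\<bar> \<le> ?n * (?n * (?n * (a * b\<^sup>2)))" for i
    by (rule sum_abs_bound[OF 2])
  have 4: "\<bar>\<Sum>i\<in>UNIV. \<Sum>j\<in>UNIV. \<Sum>k\<in>UNIV. \<Sum>l\<in>UNIV. (C i j k l - C' i j k l) * E$i$j * E$k$l\<bar> \<le> ?n * (?n * (?n * (?n * (a * b\<^sup>2))))"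
    by (rule sum_abs_bound[OF 3])
  then show ?thesis unfolding eq by (simp add: power4_eq_xxxx mult_ac)
qed

lemma contract_bound:
  fixes C :: "'n::finite tensor4"
  assumes a: "\<forall>i j k l. \<bar>C i j k l\<bar> \<le> a" and b: "\<forall>i j. \<bar>E$i$j\<bar> \<le> b"
  shows "\<bar>contract C E\<bar> \<le> real CARD('n) ^ 4 * (a * b\<^sup>2)"
  using contract_diff_bound[of C "\<lambda>_ _ _ _. 0" a E b] a b by (simp add: contract_def)


lemma det_meas:
  fixes A :: "'a \<Rightarrow> real^'n::finite^'n"
  assumes "\<And>i j. (\<lambda>x. A x $ i $ j) \<in> borel_measurable M"
  shows "(\<lambda>x. det (A x)) \<in> borel_measurable M"
  unfolding det_def using assms by measurable

lemma contract_meas: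
  fixes C :: "'a \<Rightarrow> 'n::finite tensor4" and E :: "'a \<Rightarrow> real^'n^'n"
  assumes "\<And>i j k l. (\<lambda>x. C x i j k l) \<in> borel_measurable M"
    and "\<And>i j. (\<lambda>x. E x $ i $ j) \<in> borel_measurable M"
  shows "(\<lambda>x. contract (C x) (E x)) \<in> borel_measurable M"
  unfolding contract_def using assms by measurable

lemma sqrt_near_one:
  fixes r :: real
  assumes "r \<ge> 0"
  shows "\<bar>sqrt r - 1\<bar> \<le> \<bar>r - 1\<bar>"
proof -
  have "r - 1 = (sqrt r - 1) * (sqrt r + 1)" using assms by (simp add: algebra_simps)
  moreover have "\<bar>sqrt r + 1\<bar> = sqrt r + 1" using assms by simp
  ultimately have "\<bar>r - 1\<bar> = \<bar>sqrt r - 1\<bar> * (sqrt r + 1)" by (metis abs_mult)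
  moreover have "\<bar>sqrt r - 1\<bar> * 1 \<le> \<bar>sqrt r - 1\<bar> * (sqrt r + 1)" using assms by (intro mult_left_mono) auto
  ultimately show ?thesis by simp
qed

theorem mainTheorem1:
  fixes M :: "'a measure"
    and g0 Eb :: "'a \<Rightarrow> real^'n::finite^'n"
    and C :: "'a \<Rightarrow> 'n tensor4"
    and Chat :: "real \<Rightarrow> 'a \<Rightarrow> 'n tensor4"
  assumes finM: "finite_measure M"
    and g0_meas: "\<And>i j. (\<lambda>x. g0 x $ i $ j) \<in> borel_measurable M"
    and Eb_meas: "\<And>i j. (\<lambda>x. Eb x $ i $ j) \<in> borel_measurable M"
    and C_meas: "\<And>i j k l. (\<lambda>x. C x i j k l) \<in> borel_measurable M"
    and Chat_meas: "\<And>\<alpha> i j k l. (\<lambda>x. Chat \<alpha> x i j k l) \<in> borel_measurable M"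
    and g0_sym: "\<And>x. x \<in> space M \<Longrightarrow> symmetric_mat (g0 x)"
    and g0_pos: "\<exists>c>0. \<forall>x\<in>space M. \<forall>v. v \<bullet> (g0 x *v v) \<ge> c * (norm v)\<^sup>2"
    and g0_bdd: "\<exists>B. \<forall>x\<in>space M. \<forall>i j. \<bar>g0 x $ i $ j\<bar> \<le> B"
    and Eb_sym: "\<And>x. x \<in> space M \<Longrightarrow> symmetric_mat (Eb x)"
    and Eb_bdd: "\<exists>B. \<forall>x\<in>space M. \<forall>i j. \<bar>Eb x $ i $ j\<bar> \<le> B"
    and C_stiff: "\<And>x. x \<in> space M \<Longrightarrow> is_stiffness (C x)"
    and C_bdd: "\<exists>B. \<forall>x\<in>space M. \<forall>i j k l. \<bar>C x i j k l\<bar> \<le> B"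
    and Chat_stiff: "\<And>\<alpha> x. x \<in> space M \<Longrightarrow> is_stiffness (Chat \<alpha> x)"
    and Chat_approx: "\<exists>K \<delta>. \<delta> > 0 \<and> (\<forall>\<alpha>. \<bar>\<alpha>\<bar> < \<delta> \<longrightarrow>
                 (\<forall>x\<in>space M. \<forall>i j k l. \<bar>Chat \<alpha> x i j k l - C x i j k l\<bar> \<le> K * \<bar>\<alpha>\<bar>))"
  defines "W \<equiv> (\<lambda>\<alpha>. strain_energy M C (\<lambda>x. green_strain (g0 x) (cur_metric g0 Eb \<alpha> x)) (\<lambda>x. 1))"
    and "What \<equiv> (\<lambda>\<alpha>. strain_energy M (Chat \<alpha>)
                 (\<lambda>x. green_strain (cur_metric g0 Eb \<alpha> x) (g0 x))
                 (\<lambda>x. vol_ratio (g0 x) (cur_metric g0 Eb \<alpha> x)))"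
  shows "(\<lambda>\<alpha>. What \<alpha> - W \<alpha>) \<in> O[at 0](\<lambda>\<alpha>. \<alpha> ^ 3)"
proof -
  interpret finite_measure M by (rule finM)
  obtain c where c: "c > 0" "\<And>x. x \<in> space M \<Longrightarrow> \<forall>v. v \<bullet> (g0 x *v v) \<ge> c * (norm v)\<^sup>2"
    using g0_pos by blast
  obtain Bg0 where Bg0: "\<forall>x\<in>space M. \<forall>i j. \<bar>g0 x $ i $ j\<bar> \<le> Bg0" using g0_bdd by blast
  define Bg where "Bg = max Bg0 0"
  have Bg: "Bg \<ge> 0" "\<And>x i j. x \<in> space M \<Longrightarrow> \<bar>g0 x $ i $ j\<bar> \<le> Bg"
    using Bg0 unfolding Bg_def by (auto intro: le_max_iff_disj[THEN iffD2])
  obtain Be0 where Be0: "\<forall>x\<in>space M. \<forall>i j. \<bar>Eb x $ i $ j\<bar> \<le> Be0" using Eb_bdd by blast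
  define Be where "Be = max Be0 0"
  have Be: "Be \<ge> 0" "\<And>x i j. x \<in> space M \<Longrightarrow> \<bar>Eb x $ i $ j\<bar> \<le> Be"
    using Be0 unfolding Be_def by (auto intro: le_max_iff_disj[THEN iffD2])
  obtain Bc0 where Bc0: "\<forall>x\<in>space M. \<forall>i j k l. \<bar>C x i j k l\<bar> \<le> Bc0" using C_bdd by blast
  define Bc where "Bc = max Bc0 0"
  have Bc: "Bc \<ge> 0" "\<And>x i j k l. x \<in> space M \<Longrightarrow> \<bar>C x i j k l\<bar> \<le> Bc"
    using Bc0 unfolding Bc_def by (auto intro: le_max_iff_disj[THEN iffD2])
  obtain K00 \<delta>0 where \<delta>0: "\<delta>0 > 0" and K00: "\<And>\<alpha> x i j k l. \<bar>\<alpha>\<bar> < \<delta>0 \<Longrightarrow> x \<in> space M \<Longrightarrow>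
      \<bar>Chat \<alpha> x i j k l - C x i j k l\<bar> \<le> K00 * \<bar>\<alpha>\<bar>"
    using Chat_approx by blast
  define K0 where "K0 = max K00 0"
  have K0: "K0 \<ge> 0" "\<And>\<alpha> x i j k l. \<bar>\<alpha>\<bar> < \<delta>0 \<Longrightarrow> x \<in> space M \<Longrightarrow>
      \<bar>Chat \<alpha> x i j k l - C x i j k l\<bar> \<le> K0 * \<bar>\<alpha>\<bar>"
  proof -
    show "K0 \<ge> 0" by (simp add: K0_def)
    fix \<alpha> x i j k l assume "\<bar>\<alpha>\<bar> < \<delta>0" "x \<in> space M"
    then have "\<bar>Chat \<alpha> x i j k l - C x i j k l\<bar> \<le> K00 * \<bar>\<alpha>\<bar>" by (rule K00)
    also have "\<dots> \<le> K0 * \<bar>\<alpha>\<bar>" by (intro mult_right_mono) (auto simp: K0_def)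
    finally show "\<bar>Chat \<alpha> x i j k l - C x i j k l\<bar> \<le> K0 * \<bar>\<alpha>\<bar>" .
  qed
  obtain d0 where d0: "d0 > 0" and d0A: "\<And>A::real^'n^'n. (\<forall>i j. \<bar>A$i$j\<bar> \<le> Bg) \<and> (\<forall>v. v \<bullet> (A *v v) \<ge> c * (norm v)\<^sup>2) \<Longrightarrow> det A \<ge> d0"
    using det_lower[OF c(1), of Bg] by blast
  have detg0: "det (g0 x) \<ge> d0" if "x \<in> space M" for x
    using that Bg(2) c(2) by (intro d0A) auto
  define n where "n = real CARD('n)"
  define Mx where "Mx = Bg + 2 * Be + 1"
  have Mx: "Mx > 0" using Bg Be by (simp add: Mx_def)
  define L where "L = real (card {p. p permutes (UNIV::'n set)}) * (Mx ^ CARD('n) * (n * (2 * Be / Mx)))"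
  have L0: "L \<ge> 0" using Mx Be by (simp add: L_def n_def)
  define cur where "cur = cur_metric g0 Eb"
  have cur_nth: "cur \<alpha> x $ i $ j = g0 x $ i $ j + 2 * \<alpha> * Eb x $ i $ j" for \<alpha> x i j
    by (simp add: cur_def cur_metric_def)
  have detdiff: "\<bar>det (cur \<alpha> x) - det (g0 x)\<bar> \<le> L * \<bar>\<alpha>\<bar>" if "\<bar>\<alpha>\<bar> \<le> 1" "x \<in> space M" for \<alpha> x
  proof -
    have e: "\<bar>cur \<alpha> x $ i $ j - g0 x $ i $ j\<bar> \<le> 2 * \<bar>\<alpha>\<bar> * Be" for i j
    proof -
      have "\<bar>cur \<alpha> x $ i $ j - g0 x $ i $ j\<bar> = 2 * \<bar>\<alpha>\<bar> * \<bar>Eb x $ i $ j\<bar>" by (simp add: cur_nth abs_mult)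
      also have "\<dots> \<le> 2 * \<bar>\<alpha>\<bar> * Be" using Be(2)[OF that(2)] by (intro mult_left_mono) auto
      finally show ?thesis .
    qed
    have a: "\<bar>cur \<alpha> x $ i $ j\<bar> \<le> Mx" for i j
    proof -
      have "\<bar>cur \<alpha> x $ i $ j\<bar> \<le> \<bar>g0 x $ i $ j\<bar> + \<bar>cur \<alpha> x $ i $ j - g0 x $ i $ j\<bar>" by linarith
      also have "\<dots> \<le> Bg + 2 * \<bar>\<alpha>\<bar> * Be" using Bg(2)[OF that(2), of i j] e[of i j] by linarith
      also have "\<dots> \<le> Bg + 2 * Be" using that(1) Be(1) by (simp add: mult_left_le_one_le)
      finally show ?thesis by (simp add: Mx_def)
    qed
    have b: "\<bar>g0 x $ i $ j\<bar> \<le> Mx" for i j using Bg(2)[OF that(2), of i j] Be(1) by (simp add: Mx_def)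
    have "\<bar>det (cur \<alpha> x) - det (g0 x)\<bar> \<le> real (card {p. p permutes (UNIV::'n set)}) * (Mx ^ CARD('n) * (real CARD('n) * ((2 * \<bar>\<alpha>\<bar> * Be) / Mx)))"
      using a b e Mx by (intro det_lip) auto
    also have "\<dots> = L * \<bar>\<alpha>\<bar>" by (simp add: L_def n_def)
    finally show ?thesis .
  qed
  define K1 where "K1 = L / d0"
  have K1: "K1 \<ge> 0" using L0 d0 by (simp add: K1_def)
  define \<delta> where "\<delta> = min 1 (min \<delta>0 (1 / (2 * K1 + 1)))"
  have \<delta>: "\<delta> > 0" using \<delta>0 K1 by (simp add: \<delta>_def)
  define \<rho> where "\<rho> = (\<lambda>\<alpha> x. vol_ratio (g0 x) (cur \<alpha> x))"
  have rho: "\<bar>\<rho> \<alpha> x - 1\<bar> \<le> K1 * \<bar>\<alpha>\<bar> \<and> 0 \<le> \<rho> \<alpha> x \<and> \<rho> \<alpha> x \<le> 2" if "\<bar>\<alpha>\<bar> < \<delta>" "x \<in> space M" for \<alpha> x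
  proof -
    have a1: "\<bar>\<alpha>\<bar> \<le> 1" using that by (simp add: \<delta>_def)
    have dg: "det (g0 x) \<ge> d0" by (rule detg0[OF that(2)])
    define r where "r = det (cur \<alpha> x) / det (g0 x)"
    have "r - 1 = (det (cur \<alpha> x) - det (g0 x)) / det (g0 x)" using dg d0 by (simp add: r_def field_simps)
    then have "\<bar>r - 1\<bar> = \<bar>det (cur \<alpha> x) - det (g0 x)\<bar> / det (g0 x)" using dg d0 by simp
    also have "\<dots> \<le> L * \<bar>\<alpha>\<bar> / det (g0 x)" using detdiff[OF a1 that(2)] dg d0 by (intro divide_right_mono) auto
    also have "\<dots> \<le> L * \<bar>\<alpha>\<bar> / d0" using dg d0 L0 by (intro divide_left_mono) auto
    finally have r1: "\<bar>r - 1\<bar> \<le> K1 * \<bar>\<alpha>\<bar>" by (simp add: K1_def)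
    have "\<bar>\<alpha>\<bar> < 1 / (2 * K1 + 1)" using that by (simp add: \<delta>_def)
    then have "\<bar>\<alpha>\<bar> * (2 * K1 + 1) < 1" using K1 by (simp add: field_simps)
    then have "K1 * \<bar>\<alpha>\<bar> \<le> 1/2" using K1 by (simp add: algebra_simps)
    then have r2: "\<bar>r - 1\<bar> \<le> 1/2" using r1 by linarith
    then have r0: "r \<ge> 0" by linarith
    have rho_eq: "\<rho> \<alpha> x = sqrt r" by (simp add: \<rho>_def vol_ratio_def r_def)
    have "\<bar>\<rho> \<alpha> x - 1\<bar> \<le> \<bar>r - 1\<bar>" unfolding rho_eq by (rule sqrt_near_one[OF r0])
    then have h: "\<bar>\<rho> \<alpha> x - 1\<bar> \<le> 1/2" using r2 by linarith
    have "\<rho> \<alpha> x \<le> 2" using h unfolding abs_le_iff by linarith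
    moreover have "\<rho> \<alpha> x \<ge> 0" using r0 rho_eq by simp
    ultimately show ?thesis using \<open>\<bar>\<rho> \<alpha> x - 1\<bar> \<le> \<bar>r - 1\<bar>\<close> r1 by linarith
  qed
  define cC where "cC = (\<lambda>x. contract (C x) (Eb x))"
  define cH where "cH = (\<lambda>\<alpha> x. contract (Chat \<alpha> x) (Eb x))"
  define N4 where "N4 = n ^ 4"
  have N4: "N4 \<ge> 0" by (simp add: N4_def n_def)
  have cCb: "\<bar>cC x\<bar> \<le> N4 * (Bc * Be\<^sup>2)" if "x \<in> space M" for x
    unfolding cC_def N4_def n_def using Bc(2)[OF that] Be(2)[OF that] by (intro contract_bound) auto
  have cHd: "\<bar>cH \<alpha> x - cC x\<bar> \<le> N4 * ((K0 * \<bar>\<alpha>\<bar>) * Be\<^sup>2)" if "\<bar>\<alpha>\<bar> < \<delta>" "x \<in> space M" for \<alpha> x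
  proof -
    have "\<bar>\<alpha>\<bar> < \<delta>0" using that by (simp add: \<delta>_def)
    then show ?thesis
      unfolding cC_def cH_def N4_def n_def using K0(2)[OF _ that(2)] Be(2)[OF that(2)] by (intro contract_diff_bound) auto
  qed
  define Q where "Q = 2 * (N4 * (K0 * Be\<^sup>2)) + N4 * (Bc * Be\<^sup>2) * K1"
  have key: "\<bar>cH \<alpha> x * \<rho> \<alpha> x - cC x\<bar> \<le> Q * \<bar>\<alpha>\<bar>" if "\<bar>\<alpha>\<bar> < \<delta>" "x \<in> space M" for \<alpha> x
  proof -
    have "cH \<alpha> x * \<rho> \<alpha> x - cC x = (cH \<alpha> x - cC x) * \<rho> \<alpha> x + cC x * (\<rho> \<alpha> x - 1)" by (simp add: algebra_simps)
    then have "\<bar>cH \<alpha> x * \<rho> \<alpha> x - cC x\<bar> \<le> \<bar>cH \<alpha> x - cC x\<bar> * \<bar>\<rho> \<alpha> x\<bar> + \<bar>cC x\<bar> * \<bar>\<rho> \<alpha> x - 1\<bar>"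
      by (metis abs_mult abs_triangle_ineq)
    also have "\<dots> \<le> (N4 * ((K0 * \<bar>\<alpha>\<bar>) * Be\<^sup>2)) * 2 + (N4 * (Bc * Be\<^sup>2)) * (K1 * \<bar>\<alpha>\<bar>)"
      using rho[OF that] cHd[OF that] cCb[OF that(2)]
      by (intro add_mono mult_mono) auto
    also have "\<dots> = Q * \<bar>\<alpha>\<bar>" by (simp add: Q_def algebra_simps)
    finally show ?thesis .
  qed
  have gs1: "green_strain (g0 x) (cur \<alpha> x) = \<alpha> *\<^sub>R Eb x" for \<alpha> x
    by (simp add: green_strain_def cur_def cur_metric_def)
  have gs2: "green_strain (cur \<alpha> x) (g0 x) = (- \<alpha>) *\<^sub>R Eb x" for \<alpha> x
    by (simp add: green_strain_def cur_def cur_metric_def)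
  have Weq: "W \<alpha> = (\<integral>x. (1/2) * \<alpha>\<^sup>2 * cC x \<partial>M)" for \<alpha>
    unfolding W_def strain_energy_def cur_def[symmetric] gs1 contract_scale cC_def by (simp add: mult_ac)
  have Wheq: "What \<alpha> = (\<integral>x. (1/2) * \<alpha>\<^sup>2 * (cH \<alpha> x * \<rho> \<alpha> x) \<partial>M)" for \<alpha>
    unfolding What_def strain_energy_def cur_def[symmetric] gs2 contract_scale cH_def \<rho>_def by (simp add: mult_ac)
  have cC_meas: "cC \<in> borel_measurable M" unfolding cC_def by (rule contract_meas[OF C_meas Eb_meas])
  have cH_meas: "cH \<alpha> \<in> borel_measurable M" for \<alpha> unfolding cH_def by (rule contract_meas[OF Chat_meas Eb_meas])
  have rho_meas: "\<rho> \<alpha> \<in> borel_measurable M" for \<alpha>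
  proof -
    have "(\<lambda>x. det (cur \<alpha> x)) \<in> borel_measurable M"
      by (rule det_meas) (unfold cur_nth, intro borel_measurable_add borel_measurable_times borel_measurable_const g0_meas Eb_meas)
    moreover have "(\<lambda>x. det (g0 x)) \<in> borel_measurable M" by (rule det_meas[OF g0_meas])
    ultimately show ?thesis unfolding \<rho>_def vol_ratio_def by measurable
  qed
  have intC: "integrable M (\<lambda>x. (1/2) * \<alpha>\<^sup>2 * cC x)" for \<alpha>
  proof (rule integrable_const_bound[where B="(1/2) * \<alpha>\<^sup>2 * (N4 * (Bc * Be\<^sup>2))"])
    show "AE x in M. norm ((1/2) * \<alpha>\<^sup>2 * cC x) \<le> (1/2) * \<alpha>\<^sup>2 * (N4 * (Bc * Be\<^sup>2))"
      using cCb by (intro AE_I2) (auto simp: abs_mult intro!: mult_left_mono)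
    show "(\<lambda>x. (1/2) * \<alpha>\<^sup>2 * cC x) \<in> borel_measurable M" using cC_meas by measurable
  qed
  have intH: "integrable M (\<lambda>x. (1/2) * \<alpha>\<^sup>2 * (cH \<alpha> x * \<rho> \<alpha> x))" if "\<bar>\<alpha>\<bar> < \<delta>" for \<alpha>
  proof (rule integrable_const_bound[where B="(1/2) * \<alpha>\<^sup>2 * (N4 * (Bc * Be\<^sup>2) + Q * \<bar>\<alpha>\<bar>)"])
    have "\<bar>cH \<alpha> x * \<rho> \<alpha> x\<bar> \<le> N4 * (Bc * Be\<^sup>2) + Q * \<bar>\<alpha>\<bar>" if "x \<in> space M" for x
      using key[OF \<open>\<bar>\<alpha>\<bar> < \<delta>\<close> that] cCb[OF that] by linarith
    then show "AE x in M. norm ((1/2) * \<alpha>\<^sup>2 * (cH \<alpha> x * \<rho> \<alpha> x)) \<le> (1/2) * \<alpha>\<^sup>2 * (N4 * (Bc * Be\<^sup>2) + Q * \<bar>\<alpha>\<bar>)"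
      by (intro AE_I2) (auto simp: abs_mult intro!: mult_left_mono)
    show "(\<lambda>x. (1/2) * \<alpha>\<^sup>2 * (cH \<alpha> x * \<rho> \<alpha> x)) \<in> borel_measurable M" using cH_meas rho_meas by measurable
  qed
  define c' where "c' = (1/2) * Q * measure M (space M)"
  show ?thesis
  proof (rule bigoI[where c = c'])
    have H: "\<forall>\<alpha>. \<alpha> \<noteq> 0 \<and> dist \<alpha> 0 < \<delta> \<longrightarrow> norm (What \<alpha> - W \<alpha>) \<le> c' * norm (\<alpha> ^ 3)"
    proof (intro allI impI)
      fix \<alpha> :: real assume "\<alpha> \<noteq> 0 \<and> dist \<alpha> 0 < \<delta>"
      then have a: "\<bar>\<alpha>\<bar> < \<delta>" by simp
      have "What \<alpha> - W \<alpha> = (\<integral>x. (1/2) * \<alpha>\<^sup>2 * (cH \<alpha> x * \<rho> \<alpha> x) - (1/2) * \<alpha>\<^sup>2 * cC x \<partial>M)"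
        unfolding Weq Wheq by (rule Bochner_Integration.integral_diff[OF intH[OF a] intC, symmetric])
      then have "norm (What \<alpha> - W \<alpha>) = norm (\<integral>x. (1/2) * \<alpha>\<^sup>2 * (cH \<alpha> x * \<rho> \<alpha> x) - (1/2) * \<alpha>\<^sup>2 * cC x \<partial>M)"
        by (rule arg_cong)
      also have "\<dots> \<le> (\<integral>x. norm ((1/2) * \<alpha>\<^sup>2 * (cH \<alpha> x * \<rho> \<alpha> x) - (1/2) * \<alpha>\<^sup>2 * cC x) \<partial>M)"
        by (rule integral_norm_bound)
      also have "\<dots> \<le> (\<integral>x. (1/2) * \<alpha>\<^sup>2 * (Q * \<bar>\<alpha>\<bar>) \<partial>M)"
      proof (rule integral_mono)
        show "integrable M (\<lambda>x. norm ((1/2) * \<alpha>\<^sup>2 * (cH \<alpha> x * \<rho> \<alpha> x) - (1/2) * \<alpha>\<^sup>2 * cC x))"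
          by (intro integrable_norm Bochner_Integration.integrable_diff intH[OF a] intC)
        show "integrable M (\<lambda>x. (1/2) * \<alpha>\<^sup>2 * (Q * \<bar>\<alpha>\<bar>))" by (rule integrable_const)
        fix x assume x: "x \<in> space M"
        have "(1/2) * \<alpha>\<^sup>2 * (cH \<alpha> x * \<rho> \<alpha> x) - (1/2) * \<alpha>\<^sup>2 * cC x = (1/2) * \<alpha>\<^sup>2 * (cH \<alpha> x * \<rho> \<alpha> x - cC x)"
          by (simp only: right_diff_distrib)
        note E = this
        have "norm ((1/2) * \<alpha>\<^sup>2 * (cH \<alpha> x * \<rho> \<alpha> x) - (1/2) * \<alpha>\<^sup>2 * cC x) = (1/2) * \<alpha>\<^sup>2 * \<bar>cH \<alpha> x * \<rho> \<alpha> x - cC x\<bar>"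
          unfolding E real_norm_def abs_mult by simp
        also have "\<dots> \<le> (1/2) * \<alpha>\<^sup>2 * (Q * \<bar>\<alpha>\<bar>)" using key[OF a x] by (intro mult_left_mono) auto
        finally show "norm ((1/2) * \<alpha>\<^sup>2 * (cH \<alpha> x * \<rho> \<alpha> x) - (1/2) * \<alpha>\<^sup>2 * cC x) \<le> (1/2) * \<alpha>\<^sup>2 * (Q * \<bar>\<alpha>\<bar>)" .
      qed
      also have "\<dots> = measure M (space M) * ((1/2) * \<alpha>\<^sup>2 * (Q * \<bar>\<alpha>\<bar>))" using lebesgue_integral_const[of M "(1/2) * \<alpha>\<^sup>2 * (Q * \<bar>\<alpha>\<bar>)"] by simp
      also have "\<dots> = c' * norm (\<alpha> ^ 3)"
      proof -
        have abs3: "norm (\<alpha> ^ 3) = \<alpha>\<^sup>2 * \<bar>\<alpha>\<bar>" by (simp add: power_abs power2_eq_square power3_eq_cube abs_mult)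
        show ?thesis unfolding abs3 c'_def by (simp only: mult_ac)
      qed
      finally show "norm (What \<alpha> - W \<alpha>) \<le> c' * norm (\<alpha> ^ 3)" .
    qed
    show "\<forall>\<^sub>F \<alpha> in at 0. norm (What \<alpha> - W \<alpha>) \<le> c' * norm (\<alpha> ^ 3)"
      unfolding eventually_at using \<delta> H by blast
  qed
qed

end
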